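(* Let $d=\{0,\dots,c-1\}$ and let $\tilde f$ be a real-valued function on row-stochastic matrices $p\in[0,1]^{n\times c}$ that is entry-wise concave, i.e., $\sum_{r\in d}p_{ir}\tilde f(\operatorname{der}(i,r;p))\le\tilde f(p)$ for all such $p$ and all $i\in[n]$. Let $p_{\mathrm{init}}$ be row-stochastic. Consider greedy derandomization: starting from $p_{\mathrm{cur}}=p_{\mathrm{init}}$, repeatedly choose $(i^*,x^* )\in\arg\min_{(i,x)\in[n]\times d}\tilde f(\operatorname{der}(i,x;p_{\mathrm{cur}}))$ and set $p_{\mathrm{cur}}\leftarrow\operatorname{der}(i^*,x^*;p_{\mathrm{cur}})$. Then there is a finite sequence of such greedy steps (with ties broken suitably) ending at $p_{\mathrm{final}}$ such that (1) every row of $p_{\mathrm{final}}$ is an indicator vector (so $p_{\mathrm{final}}$ corresponds to a point of $d^n$); (2) $\tilde f(p_{\mathrm{final}})\le\tilde f(p_{\mathrm{init}})$; (3) $\tilde f(p_{\mathrm{final}})\le\min_{(i,x)\in[n]\times d}\tilde f(\operatorname{der}(i,x;p_{\mathrm{final}}))$.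
   Context: For $p\in[0,1]^{n\times c}$, $i\in[n]$, $x\in d$, $\operatorname{der}(i,x;p)$ is the matrix equal to $p$ except that its $i$-th row is replaced by the indicator vector of $x$ (entry $1$ in column $x$, $0$ elsewhere). A matrix is row-stochastic if all entries lie in $[0,1]$ and each row sums to $1$. *)

theory Defs
  imports "HOL-Analysis.Analysis"
begin

text \<open>Matrices in [0,1]^(n x c) are rendered as real^'c^'n, with the row index
  type 'n (|'n| = n) and the column/label type 'c (|'c| = c, playing the role of d).\<close>

definition indicator_row :: "'c::finite \<Rightarrow> real^'c" where
  "indicator_row x = (\<chi> r. if r = x then 1 else 0)"

definition der :: "'n::finite \<Rightarrow> 'c::finite \<Rightarrow> real^'c^'n \<Rightarrow> real^'c^'n" where
  "der i x p = (\<chi> j. if j = i then indicator_row x else p $ j)"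

definition row_stochastic :: "real^'c::finite^'n::finite \<Rightarrow> bool" where
  "row_stochastic p \<longleftrightarrow> (\<forall>i r. 0 \<le> p $ i $ r \<and> p $ i $ r \<le> 1) \<and> (\<forall>i. (\<Sum>r\<in>UNIV. p $ i $ r) = 1)"

definition entrywise_concave :: "(real^'c::finite^'n::finite \<Rightarrow> real) \<Rightarrow> bool" where
  "entrywise_concave f \<longleftrightarrow>
     (\<forall>p i. row_stochastic p \<longrightarrow> (\<Sum>r\<in>UNIV. p $ i $ r * f (der i r p)) \<le> f p)"

definition greedy_step :: "(real^'c::finite^'n::finite \<Rightarrow> real) \<Rightarrow> real^'c^'n \<Rightarrow> real^'c^'n \<Rightarrow> bool" where
  "greedy_step f p q \<longleftrightarrow>
     (\<exists>i x. q = der i x p \<and> (\<forall>j y. f (der i x p) \<le> f (der j y p)))"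

end

theory Submission
  imports Defs
begin

definition mval :: "(real^'c::finite^'n::finite \<Rightarrow> real) \<Rightarrow> real^'c^'n \<Rightarrow> real" where
  "mval f q = Min (range (\<lambda>(i, x). f (der i x q)))"

lemma mval_le: "mval f q \<le> f (der i x q)"
  unfolding mval_def by (rule Min_le) (auto intro: rev_image_eqI[of "(i,x)"])

lemma mval_att: "\<exists>i x. f (der i x q) = mval f q"
proof -
  have "mval f q \<in> range (\<lambda>(i, x). f (der i x q))"
    unfolding mval_def by (rule Min_in) auto
  then show ?thesis by (auto intro: sym)
qed

lemma greedy_of: "f (der i x q) = mval f q \<Longrightarrow> greedy_step f q (der i x q)"
  unfolding greedy_step_def using mval_le by metis

lemma sum_ind: "(\<Sum>r\<in>UNIV. indicator_row (x::'c::finite) $ r) = 1"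
  unfolding indicator_row_def by simp

lemma der_rs: "row_stochastic p \<Longrightarrow> row_stochastic (der i x p)"
  unfolding row_stochastic_def der_def using sum_ind[of x]
  by (auto simp: indicator_row_def)

lemma greedy_rs: "greedy_step f p q \<Longrightarrow> row_stochastic p \<Longrightarrow> row_stochastic q"
  unfolding greedy_step_def using der_rs by blast

lemma reach_rs: "(greedy_step f)\<^sup>*\<^sup>* p q \<Longrightarrow> row_stochastic p \<Longrightarrow> row_stochastic q"
  by (induction rule: rtranclp_induct) (auto intro: greedy_rs)

lemma greedy_shape:
  assumes g: "greedy_step f p q" and h: "\<forall>j. p $ j \<in> insert (p0 $ j) (range indicator_row)"
  shows "\<forall>j. q $ j \<in> insert (p0 $ j) (range indicator_row)"
proof
  fix j
  from g obtain i x where "q = der i x p" unfolding greedy_step_def by blast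
  then show "q $ j \<in> insert (p0 $ j) (range indicator_row)"
    using h[rule_format, of j] by (cases "j = i") (auto simp: der_def)
qed

lemma reach_shape: "(greedy_step f)\<^sup>*\<^sup>* p0 q \<Longrightarrow>
   (\<forall>j. q $ j \<in> insert (p0 $ j) (range indicator_row))"
  by (induction rule: rtranclp_induct) (auto dest: greedy_shape)

lemma finite_shape: "finite {q :: real^'c::finite^'n::finite. \<forall>j. q $ j \<in> insert (p0 $ j) (range indicator_row)}"
proof -
  let ?A = "PiE UNIV (\<lambda>j. insert (p0 $ j) (range (indicator_row :: 'c \<Rightarrow> real^'c)))"
  have "finite ?A" by (intro finite_PiE) auto
  moreover have "{q :: real^'c^'n. \<forall>j. q $ j \<in> insert (p0 $ j) (range indicator_row)}
       \<subseteq> (\<lambda>g. \<chi> j. g j) ` ?A"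
  proof
    fix q :: "real^'c^'n" assume "q \<in> {q. \<forall>j. q $ j \<in> insert (p0 $ j) (range indicator_row)}"
    then have "(\<lambda>j. q $ j) \<in> ?A" by auto
    moreover have "q = (\<chi> j. (\<lambda>j. q $ j) j)" by simp
    ultimately show "q \<in> (\<lambda>g. \<chi> j. g j) ` ?A" by blast
  qed
  ultimately show ?thesis by (rule finite_surj)
qed

lemma conc_le:
  fixes q :: "real^'c::finite^'n::finite"
  assumes ec: "entrywise_concave f" and rs: "row_stochastic q"
  shows "mval f q \<le> f q"
proof -
  obtain i :: 'n where True by blast
  have "(\<Sum>r\<in>UNIV. q $ i $ r * mval f q) \<le> (\<Sum>r\<in>UNIV. q $ i $ r * f (der i r q))"
    using rs unfolding row_stochastic_def by (intro sum_mono mult_left_mono mval_le) auto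
  also have "\<dots> \<le> f q" using ec rs unfolding entrywise_concave_def by blast
  finally show ?thesis using rs unfolding row_stochastic_def by (simp add: sum_distrib_right[symmetric])
qed

lemma conc_eq:
  assumes ec: "entrywise_concave f" and rs: "row_stochastic q" and eq: "f q \<le> mval f q"
  shows "\<exists>x. q $ i $ x > 0 \<and> f (der i x q) = mval f q"
proof -
  have s1: "(\<Sum>r\<in>UNIV. q $ i $ r) = 1" and nn: "\<And>r. 0 \<le> q $ i $ r"
    using rs unfolding row_stochastic_def by auto
  have "(\<Sum>r\<in>UNIV. q $ i $ r * (f (der i r q) - mval f q))
       = (\<Sum>r\<in>UNIV. q $ i $ r * f (der i r q)) - (\<Sum>r\<in>UNIV. q $ i $ r) * mval f q"
    by (simp add: right_diff_distrib sum_subtractf sum_distrib_right)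
  also have "\<dots> \<le> 0"
  proof -
    have "(\<Sum>r\<in>UNIV. q $ i $ r * f (der i r q)) \<le> f q"
      using ec rs unfolding entrywise_concave_def by blast
    then show ?thesis using eq s1 by simp
  qed
  finally have le0: "(\<Sum>r\<in>UNIV. q $ i $ r * (f (der i r q) - mval f q)) \<le> 0" .
  have nn2: "\<And>r. 0 \<le> q $ i $ r * (f (der i r q) - mval f q)"
    by (rule mult_nonneg_nonneg[OF nn]) (use mval_le[of f q i] in simp)
  have z: "\<And>r. q $ i $ r * (f (der i r q) - mval f q) = 0"
  proof -
    fix r
    have "(\<Sum>r\<in>UNIV. q $ i $ r * (f (der i r q) - mval f q)) = 0"
      using le0 nn2 by (meson antisym sum_nonneg)
    then show "q $ i $ r * (f (der i r q) - mval f q) = 0"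
      using nn2 by (simp add: sum_nonneg_eq_0_iff)
  qed
  obtain x where "q $ i $ x \<noteq> 0" using s1 by (metis sum.neutral zero_neq_one)
  then have "q $ i $ x > 0" using nn[of x] by simp
  moreover have "f (der i x q) = mval f q" using z[of x] \<open>q $ i $ x > 0\<close> by simp
  ultimately show ?thesis by blast
qed

theorem mainTheorem14:
  fixes f :: "real^'c::finite^'n::finite \<Rightarrow> real"
    and p_init :: "real^'c^'n"
  assumes "entrywise_concave f"
    and "row_stochastic p_init"
  shows "\<exists>p_final. (greedy_step f)\<^sup>*\<^sup>* p_init p_final
           \<and> (\<forall>i. \<exists>x. p_final $ i = indicator_row x)
           \<and> f p_final \<le> f p_init
           \<and> f p_final \<le> Min (range (\<lambda>(i, x). f (der i x p_final)))"
proof -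
  define S where "S = {q. (greedy_step f)\<^sup>*\<^sup>* p_init q}"
  have finS: "finite S" unfolding S_def
    by (rule finite_subset[OF _ finite_shape[of p_init]]) (auto dest: reach_shape)
  have pS: "p_init \<in> S" unfolding S_def by simp
  define v where "v = Min (f ` S)"
  have vle: "\<And>q. q \<in> S \<Longrightarrow> v \<le> f q" unfolding v_def using finS by simp
  have "v \<in> f ` S" unfolding v_def using finS pS by (intro Min_in) auto
  define S' where "S' = {q \<in> S. f q = v}"
  have finS': "finite S'" using finS unfolding S'_def by simp
  have neS': "S' \<noteq> {}" using \<open>v \<in> f ` S\<close> unfolding S'_def by auto
  define g where "g = (\<lambda>q::real^'c^'n. card {j. \<exists>x. q $ j = indicator_row x})"
  obtain q where qS': "q \<in> S'" and qmax: "\<And>q'. q' \<in> S' \<Longrightarrow> g q' \<le> g q"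
  proof -
    have "Max (g ` S') \<in> g ` S'" using finS' neS' by (intro Max_in) auto
    then obtain q where "q \<in> S'" "g q = Max (g ` S')" by auto
    moreover have "\<And>q'. q' \<in> S' \<Longrightarrow> g q' \<le> Max (g ` S')" using finS' by simp
    ultimately show ?thesis using that by metis
  qed
  have qS: "q \<in> S" and fq: "f q = v" using qS' unfolding S'_def by auto
  have rsq: "row_stochastic q" using qS assms(2) reach_rs unfolding S_def by blast
  have reach: "\<And>q'. greedy_step f q q' \<Longrightarrow> q' \<in> S"
    using qS unfolding S_def by auto
  obtain i0 x0 where att: "f (der i0 x0 q) = mval f q" using mval_att by blast
  have "der i0 x0 q \<in> S" using reach greedy_of[OF att] by blast
  then have "f q \<le> mval f q" using vle fq att by metis
  then have eqm: "f q = mval f q" using conc_le[OF assms(1) rsq] by simp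
  have allind: "\<forall>i. \<exists>x. q $ i = indicator_row x"
  proof (rule ccontr)
    assume "\<not> ?thesis"
    then obtain i where ni: "\<forall>x. q $ i \<noteq> indicator_row x" by blast
    obtain x where "q $ i $ x > 0" and fx: "f (der i x q) = mval f q"
      using conc_eq[OF assms(1) rsq] eqm by fastforce
    define q' where "q' = der i x q"
    have "q' \<in> S" using reach greedy_of[OF fx] unfolding q'_def by blast
    then have "q' \<in> S'" using fx eqm fq unfolding S'_def q'_def by simp
    have "{j. \<exists>x. q $ j = indicator_row x} \<subset> {j. \<exists>x. q' $ j = indicator_row x}"
      using ni unfolding q'_def der_def by auto
    then have "g q < g q'" unfolding g_def by (intro psubset_card_mono) auto
    with qmax[OF \<open>q' \<in> S'\<close>] show False by simp
  qed
  show ?thesis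
  proof (intro exI conjI)
    show "(greedy_step f)\<^sup>*\<^sup>* p_init q" using qS unfolding S_def by simp
    show "\<forall>i. \<exists>x. q $ i = indicator_row x" by (rule allind)
    show "f q \<le> f p_init" using vle[OF pS] fq by simp
    show "f q \<le> Min (range (\<lambda>(i, x). f (der i x q)))" using eqm unfolding mval_def by simp
  qed
qed

end
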